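(* Let $M$ be a $3$-manifold smoothly embedded in $\mathbb R^3$ and let $f\colon M\setminus\mathcal S\to\mathcal O_3$ be a $3$-frame field with singularity set $\mathcal S$. Then every isolated point singularity $s\in\mathcal S$ (i.e. a point of $\mathcal S$ having a neighbourhood in $M$ meeting $\mathcal S$ only in $s$) that does not lie on $\partial M$ is redundant.
   Context: $\mathcal O_3:=O(3)/\mathcal B_3\cong SO(3)/\mathcal D_3$, where $\mathcal B_3$ is the group of $3\times3$ signed permutation matrices acting by right multiplication and $\mathcal D_3$ its positive-determinant subgroup (the space of orthogonal frames with unordered, undirected axes). A $3$-frame field on $M\subseteq\mathbb R^3$ with singularity set $\mathcal S$ is a continuous map $M\setminus\mathcal S\to\mathcal O_3$; it is boundary-aligned if at every point of $\partial M\setminus\mathcal S$ one axis is normal to $\partial M$. For $B\subseteq M$, $\mathrm{Int}_M(B)$ is its interior as a subspace of $M$. With $N=M\setminus\mathcal S$, a subset $U\subseteq\mathcal S$ is redundant if there exist a closed $B'\subseteq M$ and a frame field $f'\colon N\cup\mathrm{Int}_M(B')\to\mathcal O_3$ with $U\subseteq\mathrm{Int}_M(B')$ and $f'=f$ on $N\setminus\mathrm{Int}_M(B')$, where $f'$ must be boundary-aligned if $f$ is. *)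

theory Defs
  imports "HOL-Analysis.Analysis"
begin

type_synonym mat3 = "real^3^3"
type_synonym pt3 = "real^3"

definition signed_perm_matrix :: "mat3 \<Rightarrow> bool" where
  "signed_perm_matrix P \<longleftrightarrow>
     (\<exists>p s. p permutes (UNIV :: 3 set) \<and> (\<forall>i. s i = 1 \<or> s i = -1) \<and>
            P = (\<chi> i j. if j = p i then s i else 0))"

definition frame_of :: "mat3 \<Rightarrow> mat3 set" where
  "frame_of R = {R ** P | P. signed_perm_matrix P}"

definition O3_mats :: "mat3 set" where
  "O3_mats = {R. orthogonal_matrix R}"

definition frames3 :: "mat3 set set" where
  "frames3 = frame_of ` O3_mats"

definition frame_top :: "mat3 set topology" where
  "frame_top = topology (\<lambda>U. U \<subseteq> frames3 \<and>
       openin (top_of_set O3_mats) {R \<in> O3_mats. frame_of R \<in> U})"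

definition frame_axes :: "mat3 set \<Rightarrow> pt3 set" where
  "frame_axes F = {column i R | i R. R \<in> F}"

coinductive smooth_on :: "pt3 set \<Rightarrow> (pt3 \<Rightarrow> real) \<Rightarrow> bool" for U where
  "g differentiable_on U \<Longrightarrow>
   (\<forall>i. smooth_on U (\<lambda>x. frechet_derivative g (at x) (axis i 1))) \<Longrightarrow>
   smooth_on U g"

definition local_defining_fun :: "pt3 set \<Rightarrow> pt3 \<Rightarrow> pt3 set \<Rightarrow> (pt3 \<Rightarrow> real) \<Rightarrow> bool" where
  "local_defining_fun M p U g \<longleftrightarrow>
     open U \<and> p \<in> U \<and> smooth_on U g \<and> g p = 0 \<and>
     frechet_derivative g (at p) \<noteq> (\<lambda>v. 0) \<and>
     M \<inter> U = {x \<in> U. g x \<le> 0}"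

definition smooth_3manifold :: "pt3 set \<Rightarrow> bool" where
  "smooth_3manifold M \<longleftrightarrow>
     (\<forall>p \<in> M. p \<in> interior M \<or> (\<exists>U g. local_defining_fun M p U g))"

definition mbdry :: "pt3 set \<Rightarrow> pt3 set" where
  "mbdry M = M - interior M"

definition normal_at :: "pt3 set \<Rightarrow> pt3 \<Rightarrow> pt3 \<Rightarrow> bool" where
  "normal_at M p v \<longleftrightarrow> v \<noteq> 0 \<and>
     (\<exists>U g. local_defining_fun M p U g \<and>
        (\<forall>w. frechet_derivative g (at p) w = 0 \<longrightarrow> v \<bullet> w = 0))"

definition frame_field_on :: "pt3 set \<Rightarrow> (pt3 \<Rightarrow> mat3 set) \<Rightarrow> bool" where
  "frame_field_on A f \<longleftrightarrow> continuous_map (top_of_set A) frame_top f"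

definition boundary_aligned :: "pt3 set \<Rightarrow> pt3 set \<Rightarrow> (pt3 \<Rightarrow> mat3 set) \<Rightarrow> bool" where
  "boundary_aligned M A f \<longleftrightarrow>
     (\<forall>p \<in> mbdry M \<inter> A. \<exists>v \<in> frame_axes (f p). normal_at M p v)"

definition redundant :: "pt3 set \<Rightarrow> pt3 set \<Rightarrow> (pt3 \<Rightarrow> mat3 set) \<Rightarrow> pt3 set \<Rightarrow> bool" where
  "redundant M S f U \<longleftrightarrow> U \<subseteq> S \<and>
     (\<exists>B' f'. B' \<subseteq> M \<and> closedin (top_of_set M) B' \<and>
        U \<subseteq> (top_of_set M) interior_of B' \<and>
        frame_field_on ((M - S) \<union> (top_of_set M) interior_of B') f' \<and>
        (\<forall>x \<in> (M - S) - (top_of_set M) interior_of B'. f' x = f x) \<and>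
        (boundary_aligned M (M - S) f \<longrightarrow>
           boundary_aligned M ((M - S) \<union> (top_of_set M) interior_of B') f'))"

end

theory Submission
  imports Defs
begin

type_synonym quat = "real \<times> real \<times> real \<times> real"

fun qmul :: "quat \<Rightarrow> quat \<Rightarrow> quat" where
  "qmul (a1,b1,c1,d1) (a2,b2,c2,d2) =
    (a1*a2 - b1*b2 - c1*c2 - d1*d2, a1*b2 + b1*a2 + c1*d2 - d1*c2,
     a1*c2 - b1*d2 + c1*a2 + d1*b2, a1*d2 + b1*c2 - c1*b2 + d1*a2)"

fun qconj :: "quat \<Rightarrow> quat" where
  "qconj (a,b,c,d) = (a,-b,-c,-d)"

fun Rot :: "quat \<Rightarrow> mat3" where
  "Rot (w,x,y,z) = vector[
     vector[w*w+x*x-y*y-z*z, 2*(x*y - w*z), 2*(x*z + w*y)],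
     vector[2*(x*y + w*z), w*w-x*x+y*y-z*z, 2*(y*z - w*x)],
     vector[2*(x*z - w*y), 2*(y*z + w*x), w*w-x*x-y*y+z*z]]"

lemma norm_quat: "norm ((w,x,y,z)::quat) = sqrt (w*w+x*x+y*y+z*z)"
  by (simp add: norm_Pair power2_eq_square add.assoc)

lemma norm_quat_sq: "(norm ((w,x,y,z)::quat))^2 = w*w+x*x+y*y+z*z"
  by (simp add: norm_quat add_nonneg_nonneg)

lemma Rot_mult: "Rot (qmul p q) = Rot p ** Rot q"
  by (cases p; cases q) (simp add: vec_eq_iff forall_3 matrix_matrix_mult_def sum_3 algebra_simps)

lemma Rot_conj: "Rot (qconj q) = transpose (Rot q)"
  by (cases q) (simp add: vec_eq_iff forall_3 transpose_def algebra_simps)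

lemma qmul_assoc: "qmul (qmul p q) r = qmul p (qmul q r)"
  by (cases p; cases q; cases r) (simp add: algebra_simps)

lemma qmul_conj: "qmul q (qconj q) = ((norm q)^2, 0, 0, 0)"
  by (cases q) (simp add: norm_quat_sq algebra_simps)

lemma qmul_conj2: "qmul (qconj q) q = ((norm q)^2, 0, 0, 0)"
  by (cases q) (simp add: norm_quat_sq algebra_simps)

lemma qmul_one: "qmul (1,0,0,0) q = q" "qmul q (1,0,0,0) = q"
  by (cases q, simp)+

lemma norm_qmul: "norm (qmul p q) = norm p * norm q"
proof -
  have "(norm (qmul p q))^2 = (norm p * norm q)^2"
    by (cases p; cases q) (simp only: qmul.simps norm_quat_sq power_mult_distrib, simp add: algebra_simps)
  then show ?thesis by (simp add: power2_eq_iff_nonneg)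
qed

lemma norm_qconj: "norm (qconj q) = norm q"
  by (cases q) (simp add: norm_quat)

lemma Rot_one: "Rot (1,0,0,0) = mat 1"
  by (simp add: vec_eq_iff forall_3 mat_def)

lemma Rot_scal: "Rot (r,0,0,0) = (r*r) *\<^sub>R mat 1"
  by (simp add: vec_eq_iff forall_3 mat_def)

lemma Rot_orth: assumes "norm q = 1" shows "orthogonal_matrix (Rot q)"
proof -
  have "Rot q ** transpose (Rot q) = mat 1"
    using Rot_mult[of q "qconj q", symmetric] by (simp only: Rot_conj qmul_conj assms Rot_one power_one)
  moreover have "transpose (Rot q) ** Rot q = mat 1"
    using Rot_mult[of "qconj q" q, symmetric] by (simp only: Rot_conj qmul_conj2 assms Rot_one power_one)
  ultimately show ?thesis by (simp add: orthogonal_matrix_def)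
qed

definition Psi :: "mat3 \<Rightarrow> real^3^3^3^3" where
  "Psi R = (\<chi> a b c d. \<Sum>i\<in>UNIV. R$a$i * R$b$i * R$c$i * R$d$i)"

definition Qf :: "mat3 \<Rightarrow> real^3 \<Rightarrow> real" where
  "Qf R v = (\<Sum>i\<in>UNIV. (\<Sum>a\<in>UNIV. R$a$i * v$a)^4)"

lemma Qf_Psi: "Qf R v = (\<Sum>a\<in>UNIV. \<Sum>b\<in>UNIV. \<Sum>c\<in>UNIV. \<Sum>d\<in>UNIV. Psi R $a$b$c$d * v$a * v$b * v$c * v$d)"
  unfolding Qf_def Psi_def by (simp add: sum_3 algebra_simps power4_eq_xxxx)

lemma Psi_eq_Qf: "Psi R = Psi R' \<Longrightarrow> Qf R v = Qf R' v"
  by (simp add: Qf_Psi)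

lemma signed_perm_entry:
  assumes "signed_perm_matrix P"
  obtains p s where "p permutes UNIV" "\<forall>i. s i = 1 \<or> s i = -1"
    "\<And>i j. P$i$j = (if j = p i then s i else 0)"
  using assms unfolding signed_perm_matrix_def by auto

lemma Psi_perm:
  assumes "signed_perm_matrix P"
  shows "Psi (R ** P) = Psi R"
proof -
  obtain p s where p: "p permutes UNIV" and s: "\<forall>i. s i = 1 \<or> s i = -1"
    and P: "\<And>i j. P$i$j = (if j = p i then s i else 0)"
    using signed_perm_entry[OF assms] by blast
  define q where "q = inv p"
  have q: "q permutes UNIV" using p permutes_inv q_def by blast
  have pq: "\<And>j k. (j = p k) = (k = q j)"
    using p q_def permutes_inverses(1,2) by metis
  have RP: "(R ** P)$a$j = R$a$(q j) * s (q j)" for a j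
  proof -
    have "(R ** P)$a$j = (\<Sum>k\<in>UNIV. R$a$k * (if j = p k then s k else 0))"
      by (simp add: matrix_matrix_mult_def P)
    also have "\<dots> = (\<Sum>k\<in>UNIV. if k = q j then R$a$k * s k else 0)"
      by (rule sum.cong) (auto simp: pq)
    finally show ?thesis by simp
  qed
  have s4: "s k * s k * s k * s k = 1" for k using s[rule_format, of k] by auto
  have "(\<Sum>j\<in>UNIV. (R ** P)$a$j * (R ** P)$b$j * (R ** P)$c$j * (R ** P)$d$j)
        = (\<Sum>j\<in>UNIV. R$a$(q j) * R$b$(q j) * R$c$(q j) * R$d$(q j))" for a b c d
  proof (rule sum.cong[OF refl])
    fix j
    have "(R ** P)$a$j * (R ** P)$b$j * (R ** P)$c$j * (R ** P)$d$j
       = (R$a$(q j) * R$b$(q j) * R$c$(q j) * R$d$(q j)) * (s (q j) * s (q j) * s (q j) * s (q j))"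
      by (simp add: RP algebra_simps)
    then show "(R ** P)$a$j * (R ** P)$b$j * (R ** P)$c$j * (R ** P)$d$j
       = R$a$(q j) * R$b$(q j) * R$c$(q j) * R$d$(q j)" by (simp add: s4)
  qed
  also have "\<dots> a b c d = (\<Sum>j\<in>UNIV. R$a$j * R$b$j * R$c$j * R$d$j)" for a b c d
    using sum.permute[OF q, of "\<lambda>j. R$a$j * R$b$j * R$c$j * R$d$j"] by (simp add: o_def)
  finally show ?thesis unfolding Psi_def by (simp add: vec_eq_iff)
qed

lemma signed_perm_orth:
  assumes "signed_perm_matrix P"
  shows "orthogonal_matrix P"
proof -
  obtain p s where p: "p permutes UNIV" and s: "\<forall>i. s i = 1 \<or> s i = -1"
    and P: "\<And>i j. P$i$j = (if j = p i then s i else 0)"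
    using signed_perm_entry[OF assms] by blast
  have ss: "s k * s k = 1" for k using s[rule_format, of k] by auto
  have pinj: "(p i = p j) = (i = j)" for i j using p by (metis permutes_inverses(2))
  have A: "P ** transpose P = mat 1"
  proof -
    have "(\<Sum>k\<in>UNIV. (if k = p i then s i else 0) * (if k = p j then s j else 0)) = (if i = j then 1 else 0)" for i j
    proof -
      have "(\<Sum>k\<in>UNIV. (if k = p i then s i else 0) * (if k = p j then s j else 0))
          = (\<Sum>k\<in>UNIV. if k = p i then (if p i = p j then s i * s j else 0) else 0)"
        by (rule sum.cong) auto
      also have "\<dots> = (if i = j then 1 else 0)" by (simp add: pinj ss)
      finally show ?thesis .
    qed
    then show ?thesis by (simp add: matrix_matrix_mult_def transpose_def mat_def vec_eq_iff P)
  qed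
  have B: "transpose P ** P = mat 1"
  proof -
    have pi: "(i = p k) = (k = inv p i)" for i k using p by (metis permutes_inverses(1,2))
    have "(\<Sum>k\<in>UNIV. (if i = p k then s k else 0) * (if j = p k then s k else 0)) = (if i = j then 1 else 0)" for i j
    proof -
      have "(\<Sum>k\<in>UNIV. (if i = p k then s k else 0) * (if j = p k then s k else 0))
          = (\<Sum>k\<in>UNIV. if k = inv p i then (if i = j then s k * s k else 0) else 0)"
        using p by (intro sum.cong) (auto simp: pi, metis permutes_inverses(1))
      also have "\<dots> = (if i = j then 1 else 0)" by (simp add: ss)
      finally show ?thesis .
    qed
    then show ?thesis by (simp add: matrix_matrix_mult_def transpose_def mat_def vec_eq_iff P)
  qed
  show ?thesis using A B by (simp add: orthogonal_matrix_def)
qed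

lemma signed_perm_id: "signed_perm_matrix (mat 1)"
  unfolding signed_perm_matrix_def
  by (rule exI[of _ id], rule exI[of _ "\<lambda>_. 1"]) (auto simp: permutes_id mat_def vec_eq_iff)

lemma signed_perm_neg: "signed_perm_matrix (- mat 1)"
  unfolding signed_perm_matrix_def
  by (rule exI[of _ id], rule exI[of _ "\<lambda>_. -1"]) (auto simp: permutes_id mat_def vec_eq_iff)

lemma in_frame_of: "R \<in> frame_of R"
  unfolding frame_of_def using signed_perm_id by (metis (mono_tags, lifting) matrix_mul_rid mem_Collect_eq)

lemma shep0:
  fixes a b c d e f g h i :: real
  assumes "a = e*i - f*h" "b = f*g - d*i" "c = d*h - e*g" "d = c*h - b*i" "e = a*i - c*g" "f = b*g - a*h"
   "g = b*f - c*e" "h = c*d - a*f" "i = a*e - b*d"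
   "a*a+b*b+c*c = 1" "d*d+e*e+f*f=1" "g*g+h*h+i*i=1" "a*d+b*e+c*f=0" "a*g+b*h+c*i=0" "d*g+e*h+f*i=0"
   "a*a+d*d+g*g = 1" "b*b+e*e+h*h=1" "c*c+f*f+i*i=1" "a*b+d*e+g*h=0" "a*c+d*f+g*i=0" "b*c+e*f+h*i=0"
  shows "(1+a+e+i)^2 + (h-f)^2 + (c-g)^2 + (d-b)^2 = 4*(1+a+e+i)"
  using assms by algebra

lemma shep1:
  fixes a b c d e f g h i :: real
  assumes "a = e*i - f*h" "b = f*g - d*i" "c = d*h - e*g" "d = c*h - b*i" "e = a*i - c*g" "f = b*g - a*h"
   "g = b*f - c*e" "h = c*d - a*f" "i = a*e - b*d"
   "a*a+b*b+c*c = 1" "d*d+e*e+f*f=1" "g*g+h*h+i*i=1" "a*d+b*e+c*f=0" "a*g+b*h+c*i=0" "d*g+e*h+f*i=0"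
   "a*a+d*d+g*g = 1" "b*b+e*e+h*h=1" "c*c+f*f+i*i=1" "a*b+d*e+g*h=0" "a*c+d*f+g*i=0" "b*c+e*f+h*i=0"
  shows "(1+a+e+i)^2 + (h-f)^2 - (c-g)^2 - (d-b)^2 = 4*(1+a+e+i)*a"
  using assms by algebra

lemma shep2:
  fixes a b c d e f g h i :: real
  assumes "a = e*i - f*h" "b = f*g - d*i" "c = d*h - e*g" "d = c*h - b*i" "e = a*i - c*g" "f = b*g - a*h"
   "g = b*f - c*e" "h = c*d - a*f" "i = a*e - b*d"
   "a*a+b*b+c*c = 1" "d*d+e*e+f*f=1" "g*g+h*h+i*i=1" "a*d+b*e+c*f=0" "a*g+b*h+c*i=0" "d*g+e*h+f*i=0"
   "a*a+d*d+g*g = 1" "b*b+e*e+h*h=1" "c*c+f*f+i*i=1" "a*b+d*e+g*h=0" "a*c+d*f+g*i=0" "b*c+e*f+h*i=0"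
  shows "2*((h-f)*(c-g) - (1+a+e+i)*(d-b)) = 4*(1+a+e+i)*b"
  using assms by algebra

lemma shep3:
  fixes a b c d e f g h i :: real
  assumes "a = e*i - f*h" "b = f*g - d*i" "c = d*h - e*g" "d = c*h - b*i" "e = a*i - c*g" "f = b*g - a*h"
   "g = b*f - c*e" "h = c*d - a*f" "i = a*e - b*d"
   "a*a+b*b+c*c = 1" "d*d+e*e+f*f=1" "g*g+h*h+i*i=1" "a*d+b*e+c*f=0" "a*g+b*h+c*i=0" "d*g+e*h+f*i=0"
   "a*a+d*d+g*g = 1" "b*b+e*e+h*h=1" "c*c+f*f+i*i=1" "a*b+d*e+g*h=0" "a*c+d*f+g*i=0" "b*c+e*f+h*i=0"
  shows "2*((h-f)*(d-b) + (1+a+e+i)*(c-g)) = 4*(1+a+e+i)*c"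
  using assms by algebra

lemma shep4:
  fixes a b c d e f g h i :: real
  assumes "a = e*i - f*h" "b = f*g - d*i" "c = d*h - e*g" "d = c*h - b*i" "e = a*i - c*g" "f = b*g - a*h"
   "g = b*f - c*e" "h = c*d - a*f" "i = a*e - b*d"
   "a*a+b*b+c*c = 1" "d*d+e*e+f*f=1" "g*g+h*h+i*i=1" "a*d+b*e+c*f=0" "a*g+b*h+c*i=0" "d*g+e*h+f*i=0"
   "a*a+d*d+g*g = 1" "b*b+e*e+h*h=1" "c*c+f*f+i*i=1" "a*b+d*e+g*h=0" "a*c+d*f+g*i=0" "b*c+e*f+h*i=0"
  shows "2*((h-f)*(c-g) + (1+a+e+i)*(d-b)) = 4*(1+a+e+i)*d"
  using assms by algebra

lemma shep5:
  fixes a b c d e f g h i :: real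
  assumes "a = e*i - f*h" "b = f*g - d*i" "c = d*h - e*g" "d = c*h - b*i" "e = a*i - c*g" "f = b*g - a*h"
   "g = b*f - c*e" "h = c*d - a*f" "i = a*e - b*d"
   "a*a+b*b+c*c = 1" "d*d+e*e+f*f=1" "g*g+h*h+i*i=1" "a*d+b*e+c*f=0" "a*g+b*h+c*i=0" "d*g+e*h+f*i=0"
   "a*a+d*d+g*g = 1" "b*b+e*e+h*h=1" "c*c+f*f+i*i=1" "a*b+d*e+g*h=0" "a*c+d*f+g*i=0" "b*c+e*f+h*i=0"
  shows "(1+a+e+i)^2 - (h-f)^2 + (c-g)^2 - (d-b)^2 = 4*(1+a+e+i)*e"
  using assms by algebra

lemma shep6:
  fixes a b c d e f g h i :: real
  assumes "a = e*i - f*h" "b = f*g - d*i" "c = d*h - e*g" "d = c*h - b*i" "e = a*i - c*g" "f = b*g - a*h"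
   "g = b*f - c*e" "h = c*d - a*f" "i = a*e - b*d"
   "a*a+b*b+c*c = 1" "d*d+e*e+f*f=1" "g*g+h*h+i*i=1" "a*d+b*e+c*f=0" "a*g+b*h+c*i=0" "d*g+e*h+f*i=0"
   "a*a+d*d+g*g = 1" "b*b+e*e+h*h=1" "c*c+f*f+i*i=1" "a*b+d*e+g*h=0" "a*c+d*f+g*i=0" "b*c+e*f+h*i=0"
  shows "2*((c-g)*(d-b) - (1+a+e+i)*(h-f)) = 4*(1+a+e+i)*f"
  using assms by algebra

lemma shep7:
  fixes a b c d e f g h i :: real
  assumes "a = e*i - f*h" "b = f*g - d*i" "c = d*h - e*g" "d = c*h - b*i" "e = a*i - c*g" "f = b*g - a*h"
   "g = b*f - c*e" "h = c*d - a*f" "i = a*e - b*d"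
   "a*a+b*b+c*c = 1" "d*d+e*e+f*f=1" "g*g+h*h+i*i=1" "a*d+b*e+c*f=0" "a*g+b*h+c*i=0" "d*g+e*h+f*i=0"
   "a*a+d*d+g*g = 1" "b*b+e*e+h*h=1" "c*c+f*f+i*i=1" "a*b+d*e+g*h=0" "a*c+d*f+g*i=0" "b*c+e*f+h*i=0"
  shows "2*((h-f)*(d-b) - (1+a+e+i)*(c-g)) = 4*(1+a+e+i)*g"
  using assms by algebra

lemma shep8:
  fixes a b c d e f g h i :: real
  assumes "a = e*i - f*h" "b = f*g - d*i" "c = d*h - e*g" "d = c*h - b*i" "e = a*i - c*g" "f = b*g - a*h"
   "g = b*f - c*e" "h = c*d - a*f" "i = a*e - b*d"
   "a*a+b*b+c*c = 1" "d*d+e*e+f*f=1" "g*g+h*h+i*i=1" "a*d+b*e+c*f=0" "a*g+b*h+c*i=0" "d*g+e*h+f*i=0"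
   "a*a+d*d+g*g = 1" "b*b+e*e+h*h=1" "c*c+f*f+i*i=1" "a*b+d*e+g*h=0" "a*c+d*f+g*i=0" "b*c+e*f+h*i=0"
  shows "2*((c-g)*(d-b) + (1+a+e+i)*(h-f)) = 4*(1+a+e+i)*h"
  using assms by algebra

lemma shep9:
  fixes a b c d e f g h i :: real
  assumes "a = e*i - f*h" "b = f*g - d*i" "c = d*h - e*g" "d = c*h - b*i" "e = a*i - c*g" "f = b*g - a*h"
   "g = b*f - c*e" "h = c*d - a*f" "i = a*e - b*d"
   "a*a+b*b+c*c = 1" "d*d+e*e+f*f=1" "g*g+h*h+i*i=1" "a*d+b*e+c*f=0" "a*g+b*h+c*i=0" "d*g+e*h+f*i=0"
   "a*a+d*d+g*g = 1" "b*b+e*e+h*h=1" "c*c+f*f+i*i=1" "a*b+d*e+g*h=0" "a*c+d*f+g*i=0" "b*c+e*f+h*i=0"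
  shows "(1+a+e+i)^2 - (h-f)^2 - (c-g)^2 + (d-b)^2 = 4*(1+a+e+i)*i"
  using assms by algebra

lemma shep_all:
  fixes a b c d e f g h i w x y z u :: real
  assumes H: "a = e*i - f*h" "b = f*g - d*i" "c = d*h - e*g" "d = c*h - b*i" "e = a*i - c*g" "f = b*g - a*h"
   "g = b*f - c*e" "h = c*d - a*f" "i = a*e - b*d"
   "a*a+b*b+c*c = 1" "d*d+e*e+f*f=1" "g*g+h*h+i*i=1" "a*d+b*e+c*f=0" "a*g+b*h+c*i=0" "d*g+e*h+f*i=0"
   "a*a+d*d+g*g = 1" "b*b+e*e+h*h=1" "c*c+f*f+i*i=1" "a*b+d*e+g*h=0" "a*c+d*f+g*i=0" "b*c+e*f+h*i=0"
    and uw: "u*w = 1+a+e+i" and uu: "u*u = 4*(1+a+e+i)" and ux: "u*x = h-f" and uy: "u*y = c-g" and uz: "u*z = d-b"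
    and u0: "u \<noteq> 0"
  shows "w*w+x*x+y*y+z*z = 1 \<and> w*w+x*x-y*y-z*z = a \<and> 2*(x*y - w*z) = b \<and> 2*(x*z + w*y) = c \<and>
    2*(x*y + w*z) = d \<and> w*w-x*x+y*y-z*z = e \<and> 2*(y*z - w*x) = f \<and>
    2*(x*z - w*y) = g \<and> 2*(y*z + w*x) = h \<and> w*w-x*x-y*y+z*z = i"
proof -
  have g0: "w*w+x*x+y*y+z*z = 1"
  proof -
    have "u*u*(w*w+x*x+y*y+z*z) = (u*w)^2+(u*x)^2+(u*y)^2+(u*z)^2" by (simp add: algebra_simps power2_eq_square)
    also have "\<dots> = u*u*1" unfolding uw ux uy uz using shep0[OF H] uu by (simp add: algebra_simps)
    finally show ?thesis using u0 by simp
  qed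
  have g1: "w*w+x*x-y*y-z*z = a"
  proof -
    have "u*u*(w*w+x*x-y*y-z*z) = (u*w)^2+(u*x)^2-(u*y)^2-(u*z)^2" by (simp add: algebra_simps power2_eq_square)
    also have "\<dots> = u*u*a" unfolding uw ux uy uz using shep1[OF H] uu by (simp add: algebra_simps)
    finally show ?thesis using u0 by simp
  qed
  have g2: "2*(x*y - w*z) = b"
  proof -
    have "u*u*(2*(x*y - w*z)) = 2*((u*x)*(u*y) - (u*w)*(u*z))" by (simp add: algebra_simps power2_eq_square)
    also have "\<dots> = u*u*b" unfolding uw ux uy uz using shep2[OF H] uu by (simp add: algebra_simps)
    finally show ?thesis using u0 by simp
  qed
  have g3: "2*(x*z + w*y) = c"
  proof -
    have "u*u*(2*(x*z + w*y)) = 2*((u*x)*(u*z) + (u*w)*(u*y))" by (simp add: algebra_simps power2_eq_square)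
    also have "\<dots> = u*u*c" unfolding uw ux uy uz using shep3[OF H] uu by (simp add: algebra_simps)
    finally show ?thesis using u0 by simp
  qed
  have g4: "2*(x*y + w*z) = d"
  proof -
    have "u*u*(2*(x*y + w*z)) = 2*((u*x)*(u*y) + (u*w)*(u*z))" by (simp add: algebra_simps power2_eq_square)
    also have "\<dots> = u*u*d" unfolding uw ux uy uz using shep4[OF H] uu by (simp add: algebra_simps)
    finally show ?thesis using u0 by simp
  qed
  have g5: "w*w-x*x+y*y-z*z = e"
  proof -
    have "u*u*(w*w-x*x+y*y-z*z) = (u*w)^2-(u*x)^2+(u*y)^2-(u*z)^2" by (simp add: algebra_simps power2_eq_square)
    also have "\<dots> = u*u*e" unfolding uw ux uy uz using shep5[OF H] uu by (simp add: algebra_simps)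
    finally show ?thesis using u0 by simp
  qed
  have g6: "2*(y*z - w*x) = f"
  proof -
    have "u*u*(2*(y*z - w*x)) = 2*((u*y)*(u*z) - (u*w)*(u*x))" by (simp add: algebra_simps power2_eq_square)
    also have "\<dots> = u*u*f" unfolding uw ux uy uz using shep6[OF H] uu by (simp add: algebra_simps)
    finally show ?thesis using u0 by simp
  qed
  have g7: "2*(x*z - w*y) = g"
  proof -
    have "u*u*(2*(x*z - w*y)) = 2*((u*x)*(u*z) - (u*w)*(u*y))" by (simp add: algebra_simps power2_eq_square)
    also have "\<dots> = u*u*g" unfolding uw ux uy uz using shep7[OF H] uu by (simp add: algebra_simps)
    finally show ?thesis using u0 by simp
  qed
  have g8: "2*(y*z + w*x) = h"
  proof -
    have "u*u*(2*(y*z + w*x)) = 2*((u*y)*(u*z) + (u*w)*(u*x))" by (simp add: algebra_simps power2_eq_square)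
    also have "\<dots> = u*u*h" unfolding uw ux uy uz using shep8[OF H] uu by (simp add: algebra_simps)
    finally show ?thesis using u0 by simp
  qed
  have g9: "w*w-x*x-y*y+z*z = i"
  proof -
    have "u*u*(w*w-x*x-y*y+z*z) = (u*w)^2-(u*x)^2-(u*y)^2+(u*z)^2" by (simp add: algebra_simps power2_eq_square)
    also have "\<dots> = u*u*i" unfolding uw ux uy uz using shep9[OF H] uu by (simp add: algebra_simps)
    finally show ?thesis using u0 by simp
  qed
  show ?thesis using g0 g1 g2 g3 g4 g5 g6 g7 g8 g9 by blast
qed

definition Adj3 :: "mat3 \<Rightarrow> mat3" where
  "Adj3 R = vector[
    vector[R$2$2*R$3$3 - R$2$3*R$3$2, R$1$3*R$3$2 - R$1$2*R$3$3, R$1$2*R$2$3 - R$1$3*R$2$2],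
    vector[R$2$3*R$3$1 - R$2$1*R$3$3, R$1$1*R$3$3 - R$1$3*R$3$1, R$1$3*R$2$1 - R$1$1*R$2$3],
    vector[R$2$1*R$3$2 - R$2$2*R$3$1, R$1$2*R$3$1 - R$1$1*R$3$2, R$1$1*R$2$2 - R$1$2*R$2$1]]"

lemma Adj3_mult: "Adj3 R ** R = det R *\<^sub>R mat 1"
  by (simp add: Adj3_def vec_eq_iff forall_3 matrix_matrix_mult_def sum_3 det_3 mat_def algebra_simps)

lemma Adj3_orth:
  assumes "orthogonal_matrix R" "det R = 1"
  shows "Adj3 R = transpose R"
proof -
  have "Adj3 R = Adj3 R ** (R ** transpose R)"
    using assms(1) by (simp add: orthogonal_matrix_def)
  also have "\<dots> = (Adj3 R ** R) ** transpose R" by (simp add: matrix_mul_assoc)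
  also have "\<dots> = transpose R" by (simp add: Adj3_mult assms(2))
  finally show ?thesis .
qed

lemma orth_eqs:
  fixes R :: mat3
  assumes "orthogonal_matrix R" "det R = 1"
  defines "a \<equiv> R$1$1" and "b \<equiv> R$1$2" and "c \<equiv> R$1$3" and "d \<equiv> R$2$1" and "e \<equiv> R$2$2"
    and "f \<equiv> R$2$3" and "g \<equiv> R$3$1" and "h \<equiv> R$3$2" and "i \<equiv> R$3$3"
  shows "a = e*i - f*h" "b = f*g - d*i" "c = d*h - e*g" "d = c*h - b*i" "e = a*i - c*g" "f = b*g - a*h"
   "g = b*f - c*e" "h = c*d - a*f" "i = a*e - b*d"
   "a*a+b*b+c*c = 1" "d*d+e*e+f*f=1" "g*g+h*h+i*i=1" "a*d+b*e+c*f=0" "a*g+b*h+c*i=0" "d*g+e*h+f*i=0"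
   "a*a+d*d+g*g = 1" "b*b+e*e+h*h=1" "c*c+f*f+i*i=1" "a*b+d*e+g*h=0" "a*c+d*f+g*i=0" "b*c+e*f+h*i=0"
proof -
  have A: "Adj3 R = transpose R" by (rule Adj3_orth[OF assms(1,2)])
  have O1: "R ** transpose R = mat 1" and O2: "transpose R ** R = mat 1"
    using assms(1) by (auto simp: orthogonal_matrix_def)
  from A have "\<forall>x y. Adj3 R $x$y = transpose R $x$y" by simp
  then show "a = e*i - f*h" "b = f*g - d*i" "c = d*h - e*g" "d = c*h - b*i" "e = a*i - c*g" "f = b*g - a*h"
   "g = b*f - c*e" "h = c*d - a*f" "i = a*e - b*d"
    unfolding a_def b_def c_def d_def e_def f_def g_def h_def i_def
    by (simp_all add: Adj3_def forall_3 transpose_def algebra_simps)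
  from O1 have "\<forall>x y. (R ** transpose R) $x$y = mat 1 $x$y" by simp
  then show "a*a+b*b+c*c = 1" "d*d+e*e+f*f=1" "g*g+h*h+i*i=1" "a*d+b*e+c*f=0" "a*g+b*h+c*i=0" "d*g+e*h+f*i=0"
    unfolding a_def b_def c_def d_def e_def f_def g_def h_def i_def
    by (simp_all add: forall_3 transpose_def matrix_matrix_mult_def sum_3 mat_def algebra_simps)
  from O2 have "\<forall>x y. (transpose R ** R) $x$y = mat 1 $x$y" by simp
  then show "a*a+d*d+g*g = 1" "b*b+e*e+h*h=1" "c*c+f*f+i*i=1" "a*b+d*e+g*h=0" "a*c+d*f+g*i=0" "b*c+e*f+h*i=0"
    unfolding a_def b_def c_def d_def e_def f_def g_def h_def i_def
    by (simp_all add: forall_3 transpose_def matrix_matrix_mult_def sum_3 mat_def algebra_simps)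
qed

lemma Rot_surj_main:
  assumes "orthogonal_matrix R" "det R = 1" "0 < 1 + R$1$1 + R$2$2 + R$3$3"
  shows "\<exists>q. norm q = 1 \<and> Rot q = R"
proof -
  define a where "a = R$1$1" define b where "b = R$1$2" define c where "c = R$1$3"
  define d where "d = R$2$1" define e where "e = R$2$2" define f where "f = R$2$3"
  define g where "g = R$3$1" define h where "h = R$3$2" define i where "i = R$3$3"
  note H = orth_eqs[OF assms(1,2), folded a_def b_def c_def d_def e_def f_def g_def h_def i_def]
  define W where "W = 1+a+e+i"
  have W0: "0 < W" using assms(3) by (simp add: W_def a_def e_def i_def)
  define w where "w = sqrt W / 2"
  define u where "u = 4*w"
  have u0: "u \<noteq> 0" using W0 by (simp add: u_def w_def)
  have ww: "w*w = W/4" using W0 by (simp add: w_def)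
  define x where "x = (h-f)/u" define y where "y = (c-g)/u" define z where "z = (d-b)/u"
  have uw: "u*w = 1+a+e+i" using ww by (simp add: u_def W_def)
  have uu: "u*u = 4*(1+a+e+i)" using ww by (simp add: u_def W_def)
  have ux: "u*x = h-f" and uy: "u*y = c-g" and uz: "u*z = d-b" using u0 by (simp_all add: x_def y_def z_def)
  note S = shep_all[OF H uw uu ux uy uz u0]
  have "norm (w,x,y,z) = 1" using S by (simp add: norm_quat)
  moreover have "Rot (w,x,y,z) = R"
    using S by (simp add: vec_eq_iff forall_3 a_def b_def c_def d_def e_def f_def g_def h_def i_def)
  ultimately show ?thesis by blast
qed

lemma Rot_surj:
  assumes R: "orthogonal_matrix R" "det R = 1"
  shows "\<exists>q. norm q = 1 \<and> Rot q = R"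
proof -
  have red: "\<exists>q. norm q = 1 \<and> Rot q = R"
    if k: "norm k = 1" "Rot (qmul k k) = mat 1" "det (Rot k) = 1" "0 < 1 + (Rot k ** R)$1$1 + (Rot k ** R)$2$2 + (Rot k ** R)$3$3" for k
  proof -
    have o: "orthogonal_matrix (Rot k ** R)" using Rot_orth[OF k(1)] R(1) orthogonal_matrix_mul by blast
    have "det (Rot k ** R) = 1" using k(3) R(2) by (simp add: det_mul)
    then obtain q where q: "norm q = 1" "Rot q = Rot k ** R" using Rot_surj_main[OF o] k(4) by blast
    have "Rot (qmul k q) = Rot k ** (Rot k ** R)" by (simp add: Rot_mult q)
    also have "\<dots> = R" using k(2) by (simp add: Rot_mult matrix_mul_assoc)
    finally show ?thesis using q k by (metis mult_1 norm_qmul)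
  qed
  have sum4: "(1 + R$1$1 + R$2$2 + R$3$3) + (1 + R$1$1 - R$2$2 - R$3$3) + (1 - R$1$1 + R$2$2 - R$3$3) + (1 - R$1$1 - R$2$2 + R$3$3) = 4"
    by simp
  consider "0 < 1 + R$1$1 + R$2$2 + R$3$3" | "0 < 1 + R$1$1 - R$2$2 - R$3$3" | "0 < 1 - R$1$1 + R$2$2 - R$3$3"
    | "0 < 1 - R$1$1 - R$2$2 + R$3$3" using sum4 by linarith
  then show ?thesis
  proof cases
    case 1 then show ?thesis using Rot_surj_main[OF R] by blast
  next
    case 2 then show ?thesis
      by (intro red[of "(0,1,0,0)"]) (simp_all add: norm_quat vec_eq_iff forall_3 matrix_matrix_mult_def sum_3 mat_def det_3)
  next
    case 3 then show ?thesis
      by (intro red[of "(0,0,1,0)"]) (simp_all add: norm_quat vec_eq_iff forall_3 matrix_matrix_mult_def sum_3 mat_def det_3)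
  next
    case 4 then show ?thesis
      by (intro red[of "(0,0,0,1)"]) (simp_all add: norm_quat vec_eq_iff forall_3 matrix_matrix_mult_def sum_3 mat_def det_3)
  qed
qed

lemma Qf_axis: "Qf A (axis k 1) = (\<Sum>j\<in>UNIV. (A$k$j)^4)"
proof -
  have "(\<Sum>a\<in>UNIV. A$a$j * axis k 1 $a) = A$k$j" for j
    by (simp add: axis_def if_distrib cong: if_cong)
  then show ?thesis by (simp add: Qf_def)
qed

lemma sum_two_le:
  fixes f :: "'a::finite \<Rightarrow> real"
  assumes "\<And>x. 0 \<le> f x" "j \<noteq> j'"
  shows "f j + f j' \<le> sum f UNIV"
proof -
  have "sum f {j, j'} \<le> sum f UNIV" by (rule sum_mono2) (auto simp: assms)
  then show ?thesis using assms(2) by simp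
qed

lemma Qf_signed_perm:
  fixes A :: mat3
  assumes orth: "orthogonal_matrix A" and Q: "\<And>k. Qf A (axis k 1) = 1"
  shows "signed_perm_matrix A"
proof -
  have O1: "A ** transpose A = mat 1" and O2: "transpose A ** A = mat 1"
    using orth by (auto simp: orthogonal_matrix_def)
  have row: "(\<Sum>j\<in>UNIV. (A$k$j)^2) = 1" for k
  proof -
    have "(A ** transpose A)$k$k = 1" using O1 by (simp add: mat_def)
    then show ?thesis by (simp add: matrix_matrix_mult_def transpose_def power2_eq_square)
  qed
  have col: "(\<Sum>k\<in>UNIV. (A$k$j)^2) = 1" for j
  proof -
    have "(transpose A ** A)$j$j = 1" using O2 by (simp add: mat_def)
    then show ?thesis by (simp add: matrix_matrix_mult_def transpose_def power2_eq_square)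
  qed
  have sq01: "(A$k$j)^2 = 0 \<or> (A$k$j)^2 = 1" for k j
  proof -
    define t where "t j = (A$k$j)^2" for j
    have t0: "0 \<le> t j" for j by (simp add: t_def)
    have ts: "sum t UNIV = 1" using row by (simp add: t_def)
    have t4: "(\<Sum>j\<in>UNIV. (t j)^2) = 1" using Q[of k] by (simp add: Qf_axis t_def power_mult[symmetric])
    have t1: "t j \<le> 1" for j using member_le_sum[of j UNIV t] t0 ts by simp
    have "(\<Sum>j\<in>UNIV. t j * (1 - t j)) = sum t UNIV - (\<Sum>j\<in>UNIV. (t j)^2)"
      by (simp add: algebra_simps power2_eq_square sum_subtractf)
    also have "\<dots> = 0" using ts t4 by simp
    finally have "\<forall>j\<in>UNIV. t j * (1 - t j) = 0"
      using sum_nonneg_eq_0_iff[of UNIV "\<lambda>j. t j * (1 - t j)"] t0 t1 by simp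
    then show ?thesis by (simp add: t_def)
  qed
  have nz: "A$k$j \<noteq> 0 \<longleftrightarrow> (A$k$j)^2 = 1" for k j using sq01[of k j] by auto
  have rowu: "A$k$j \<noteq> 0 \<Longrightarrow> A$k$j' \<noteq> 0 \<Longrightarrow> j = j'" for k j j'
  proof (rule ccontr)
    assume "A$k$j \<noteq> 0" "A$k$j' \<noteq> 0" "j \<noteq> j'"
    then have "(A$k$j)^2 + (A$k$j')^2 \<le> (\<Sum>j\<in>UNIV. (A$k$j)^2)"
      by (intro sum_two_le[where f="\<lambda>j. (A$k$j)^2"]) auto
    then show False using row[of k] nz \<open>A$k$j \<noteq> 0\<close> \<open>A$k$j' \<noteq> 0\<close> by simp
  qed
  have colu: "A$k$j \<noteq> 0 \<Longrightarrow> A$k'$j \<noteq> 0 \<Longrightarrow> k = k'" for k k' j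
  proof (rule ccontr)
    assume "A$k$j \<noteq> 0" "A$k'$j \<noteq> 0" "k \<noteq> k'"
    then have "(A$k$j)^2 + (A$k'$j)^2 \<le> (\<Sum>k\<in>UNIV. (A$k$j)^2)"
      by (intro sum_two_le[where f="\<lambda>k. (A$k$j)^2"]) auto
    then show False using col[of j] nz \<open>A$k$j \<noteq> 0\<close> \<open>A$k'$j \<noteq> 0\<close> by simp
  qed
  have ex: "\<exists>j. A$k$j \<noteq> 0" for k
  proof (rule ccontr)
    assume "\<not> (\<exists>j. A$k$j \<noteq> 0)"
    then show False using row[of k] by simp
  qed
  define p where "p k = (SOME j. A$k$j \<noteq> 0)" for k
  have pk: "A$k$(p k) \<noteq> 0" for k unfolding p_def using ex[of k] by (rule someI_ex)
  have injp: "inj p"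
    by (rule injI) (metis colu pk)
  have "surj p" using injp by (simp add: finite_UNIV_inj_surj)
  then have "bij p" using injp by (simp add: bij_def)
  then have pp: "p permutes UNIV" by (intro bij_imp_permutes) auto
  define s where "s k = A$k$(p k)" for k
  have s: "\<forall>i. s i = 1 \<or> s i = -1" using pk nz by (simp add: s_def power2_eq_1_iff)
  have "A = (\<chi> i j. if j = p i then s i else 0)"
    by (simp add: vec_eq_iff s_def) (metis pk rowu)
  then show ?thesis unfolding signed_perm_matrix_def using pp s by blast
qed

lemma Qf_mult: "Qf (R ** A) v = Qf A (transpose R *v v)"
proof -
  have "(\<Sum>a\<in>UNIV. (R ** A)$a$i * v$a) = (\<Sum>k\<in>UNIV. A$k$i * (transpose R *v v)$k)" for i
    by (simp add: matrix_matrix_mult_def matrix_vector_mult_def transpose_def sum_3 algebra_simps)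
  then show ?thesis by (simp add: Qf_def)
qed

lemma Qf_id_axis: "Qf (mat 1) (axis k 1) = 1"
proof -
  have "(\<lambda>j. (mat 1 $ k $ j :: real)^4) = (\<lambda>j. if k = j then 1 else 0)" by (auto simp: mat_def)
  then show ?thesis unfolding Qf_axis by (simp only:) simp
qed

lemma frame_sub:
  assumes R: "orthogonal_matrix R" and R': "orthogonal_matrix R'" and eq: "Psi R = Psi R'"
  shows "frame_of R \<subseteq> frame_of R'"
proof
  fix x assume "x \<in> frame_of R"
  then obtain P where P: "signed_perm_matrix P" and x: "x = R ** P" by (auto simp: frame_of_def)
  define A where "A = transpose R' ** (R ** P)"
  have oA: "orthogonal_matrix A" unfolding A_def
    by (intro orthogonal_matrix_mul orthogonal_matrix_transpose[THEN iffD2] R R' signed_perm_orth P)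
  have R'A: "R' ** A = R ** P"
    using R' by (simp add: A_def matrix_mul_assoc orthogonal_matrix_def)
  have tt: "transpose R' *v (R' *v v) = v" for v
    using R' by (simp add: matrix_vector_mul_assoc orthogonal_matrix_def)
  have "Qf A (axis k 1) = 1" for k
  proof -
    have "Qf A (axis k 1) = Qf (R' ** A) (R' *v axis k 1)" by (simp only: Qf_mult tt)
    also have "\<dots> = Qf R (R' *v axis k 1)" unfolding R'A by (rule Psi_eq_Qf[OF Psi_perm[OF P]])
    also have "\<dots> = Qf R' (R' *v axis k 1)" by (rule Psi_eq_Qf[OF eq])
    also have "\<dots> = Qf (R' ** mat 1) (R' *v axis k 1)" by simp
    also have "\<dots> = 1" by (simp only: Qf_mult tt Qf_id_axis)
    finally show ?thesis .
  qed
  then have "signed_perm_matrix A" by (rule Qf_signed_perm[OF oA])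
  then show "x \<in> frame_of R'" unfolding frame_of_def using x R'A by (metis (mono_tags, lifting) mem_Collect_eq)
qed

lemma Psi_frame_iff:
  assumes R: "orthogonal_matrix R" and R': "orthogonal_matrix R'"
  shows "Psi R = Psi R' \<longleftrightarrow> frame_of R = frame_of R'"
proof
  assume "Psi R = Psi R'" then show "frame_of R = frame_of R'"
    using frame_sub R R' by (metis subset_antisym)
next
  assume "frame_of R = frame_of R'"
  then have "R' \<in> frame_of R" using in_frame_of by metis
  then obtain P where "signed_perm_matrix P" "R' = R ** P" by (auto simp: frame_of_def)
  then show "Psi R = Psi R'" using Psi_perm by metis
qed

lemma covering_from_isometries:
  fixes p :: "'a::real_normed_vector \<Rightarrow> 'b::real_normed_vector"
  assumes C: "compact C" and contp: "continuous_on C p" and S: "p ` C = S"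
    and d0: "d > 0"
    and sep: "\<And>x y. x \<in> C \<Longrightarrow> y \<in> C \<Longrightarrow> p x = p y \<Longrightarrow> x \<noteq> y \<Longrightarrow> d \<le> dist x y"
    and iso: "\<And>x y. x \<in> C \<Longrightarrow> y \<in> C \<Longrightarrow> p x = p y \<Longrightarrow>
        \<exists>h. h ` C \<subseteq> C \<and> (\<forall>z\<in>C. p (h z) = p z) \<and> (\<forall>z\<in>C. \<forall>z'\<in>C. dist (h z) (h z') = dist z z') \<and> h x = y"
  shows "covering_space C p S"
proof -
  have sat: "openin (top_of_set C) {z\<in>C. \<exists>v\<in>V. p z = p v}" if V: "openin (top_of_set C) V" for V
  proof -
    have VC: "V \<subseteq> C" using V openin_imp_subset by blast
    show ?thesis unfolding openin_euclidean_subtopology_iff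
    proof (intro conjI ballI)
      show "{z \<in> C. \<exists>v\<in>V. p z = p v} \<subseteq> C" by blast
    next
      fix z assume "z \<in> {z \<in> C. \<exists>v\<in>V. p z = p v}"
      then obtain v where z: "z \<in> C" and v: "v \<in> V" and pz: "p z = p v" by blast
      obtain e where e: "e > 0" "\<And>x'. x' \<in> C \<Longrightarrow> dist x' v < e \<Longrightarrow> x' \<in> V"
        using V v unfolding openin_euclidean_subtopology_iff by blast
      obtain h where h: "h ` C \<subseteq> C" "\<forall>z\<in>C. p (h z) = p z" "\<forall>z\<in>C. \<forall>z'\<in>C. dist (h z) (h z') = dist z z'" "h z = v"
        using iso[OF z _ pz] v VC by blast
      show "\<exists>e>0. \<forall>x'\<in>C. dist x' z < e \<longrightarrow> x' \<in> {z \<in> C. \<exists>v\<in>V. p z = p v}"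
      proof (intro exI[of _ e] conjI ballI impI)
        fix x' assume x': "x' \<in> C" "dist x' z < e"
        have "h x' \<in> C" using h(1) x' by blast
        moreover have "dist (h x') v < e"
        proof -
          have "dist (h x') v = dist (h x') (h z)" using h(4) by simp
          also have "\<dots> = dist x' z" using h(3) x' z by blast
          finally show ?thesis using x' by simp
        qed
        ultimately have "h x' \<in> V" using e by blast
        moreover have "p x' = p (h x')" using h(2) x' by simp
        ultimately show "x' \<in> {z \<in> C. \<exists>v\<in>V. p z = p v}" using x' by blast
      qed (rule e)
    qed
  qed
  have popen: "openin (top_of_set S) (p ` V)" if V: "openin (top_of_set C) V" for V
  proof -
    define W where "W = {z\<in>C. \<exists>v\<in>V. p z = p v}"
    have VC: "V \<subseteq> C" using V openin_imp_subset by blast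
    have "closedin (top_of_set C) (C - W)" using sat[OF V] unfolding W_def by (simp add: closedin_diff)
    then have "compact (C - W)" using closedin_compact C by blast
    then have "compact (p ` (C - W))"
      using compact_continuous_image contp by (metis Diff_subset continuous_on_subset)
    then have cl: "closed (p ` (C - W))" by (simp add: compact_imp_closed)
    have "p ` V = S \<inter> (- p ` (C - W))"
    proof
      show "p ` V \<subseteq> S \<inter> - p ` (C - W)"
      proof
        fix t assume "t \<in> p ` V"
        then obtain v where v: "v \<in> V" "t = p v" by blast
        have "t \<in> S" using v VC S by blast
        moreover have "t \<notin> p ` (C - W)"
        proof
          assume "t \<in> p ` (C - W)"
          then obtain z where "z \<in> C" "z \<notin> W" "t = p z" by blast
          then show False using v unfolding W_def by blast
        qed
        ultimately show "t \<in> S \<inter> - p ` (C - W)" by blast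
      qed
      show "S \<inter> - p ` (C - W) \<subseteq> p ` V"
      proof
        fix t assume t: "t \<in> S \<inter> - p ` (C - W)"
        then obtain z where z: "z \<in> C" "t = p z" using S by blast
        then have "z \<in> W" using t by blast
        then show "t \<in> p ` V" using z unfolding W_def by force
      qed
    qed
    then show ?thesis using cl by (simp add: openin_open_Int open_Compl)
  qed
  show ?thesis
  proof (rule covering_spaceI[OF contp S])
    fix y assume "y \<in> S"
    then obtain c where c: "c \<in> C" "p c = y" using S by blast
    define B where "B x = C \<inter> ball x (d/2)" for x
    define T where "T = p ` B c"
    have Bopen: "openin (top_of_set C) (B x)" for x unfolding B_def by (simp add: openin_open_Int)
    have BT: "p ` B x = T" if x: "x \<in> C" "p x = y" for x
    proof
      obtain h where h: "h ` C \<subseteq> C" "\<forall>z\<in>C. p (h z) = p z" "\<forall>z\<in>C. \<forall>z'\<in>C. dist (h z) (h z') = dist z z'" "h x = c"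
        using iso[OF x(1) c(1)] x c by auto
      show "p ` B x \<subseteq> T"
      proof
        fix t assume "t \<in> p ` B x"
        then obtain z where z: "z \<in> C" "dist x z < d/2" "t = p z" by (auto simp: B_def)
        have "h z \<in> C" using h z by blast
        moreover have "dist c (h z) < d/2"
        proof -
          have "dist c (h z) = dist (h x) (h z)" using h(4) by simp
          also have "\<dots> = dist x z" using h(3) x z by blast
          finally show ?thesis using z by simp
        qed
        ultimately have "h z \<in> B c" by (simp add: B_def)
        moreover have "p (h z) = p z" using h(2) z by blast
        ultimately show "t \<in> T" using z unfolding T_def by (metis image_eqI)
      qed
      obtain h' where h': "h' ` C \<subseteq> C" "\<forall>z\<in>C. p (h' z) = p z" "\<forall>z\<in>C. \<forall>z'\<in>C. dist (h' z) (h' z') = dist z z'" "h' c = x"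
        using iso[OF c(1) x(1)] x c by auto
      show "T \<subseteq> p ` B x"
      proof
        fix t assume "t \<in> T"
        then obtain z where z: "z \<in> C" "dist c z < d/2" "t = p z" by (auto simp: B_def T_def)
        have "h' z \<in> C" using h' z by blast
        moreover have "dist x (h' z) < d/2"
        proof -
          have "dist x (h' z) = dist (h' c) (h' z)" using h'(4) by simp
          also have "\<dots> = dist c z" using h'(3) c z by blast
          finally show ?thesis using z by simp
        qed
        ultimately have "h' z \<in> B x" by (simp add: B_def)
        moreover have "p (h' z) = p z" using h'(2) z by blast
        ultimately show "t \<in> p ` B x" using z by (metis image_eqI)
      qed
    qed
    show "\<exists>T. y \<in> T \<and> openin (top_of_set S) T \<and>
           (\<exists>v. \<Union>v = C \<inter> p -` T \<and> (\<forall>u\<in>v. openin (top_of_set C) u) \<and>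
                pairwise disjnt v \<and> (\<forall>u\<in>v. \<exists>q. homeomorphism u T p q))"
    proof (intro exI conjI)
      show "y \<in> T" unfolding T_def B_def using c d0 by force
      show oT: "openin (top_of_set S) T" unfolding T_def by (rule popen[OF Bopen])
      show "\<Union>{B x | x. x \<in> C \<and> p x = y} = C \<inter> p -` T"
      proof
        show "\<Union>{B x | x. x \<in> C \<and> p x = y} \<subseteq> C \<inter> p -` T"
        proof clarify
          fix z x assume "z \<in> B x" "x \<in> C" "y = p x"
          then show "z \<in> C \<inter> p -` T" using BT[of x] unfolding B_def by blast
        qed
        show "C \<inter> p -` T \<subseteq> \<Union>{B x | x. x \<in> C \<and> p x = y}"
        proof
          fix z assume z: "z \<in> C \<inter> p -` T"
          then obtain a where a: "a \<in> C" "dist c a < d/2" "p z = p a" by (auto simp: T_def B_def)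
          obtain h where h: "h ` C \<subseteq> C" "\<forall>w\<in>C. p (h w) = p w" "\<forall>w\<in>C. \<forall>w'\<in>C. dist (h w) (h w') = dist w w'" "h a = z"
            using iso[OF a(1), of z] z a by auto
          have "h c \<in> C" "p (h c) = y" using h c by auto
          moreover have "dist (h c) z < d/2"
          proof -
            have "dist (h c) z = dist (h c) (h a)" using h(4) by simp
            also have "\<dots> = dist c a" using h(3) a c by blast
            finally show ?thesis using a by simp
          qed
          ultimately have "z \<in> B (h c)" "h c \<in> C" "p (h c) = y" using z unfolding B_def by auto
          then show "z \<in> \<Union>{B x | x. x \<in> C \<and> p x = y}" by blast
        qed
      qed
      show "\<forall>u\<in>{B x | x. x \<in> C \<and> p x = y}. openin (top_of_set C) u" using Bopen by blast
      show "pairwise disjnt {B x | x. x \<in> C \<and> p x = y}"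
        unfolding pairwise_def
      proof (intro ballI impI)
        fix u u' assume u: "u \<in> {B x | x. x \<in> C \<and> p x = y}" and u': "u' \<in> {B x | x. x \<in> C \<and> p x = y}"
          and ne: "u \<noteq> u'"
        obtain x where x: "x \<in> C" "p x = y" "u = B x" using u by blast
        obtain x' where x': "x' \<in> C" "p x' = y" "u' = B x'" using u' by blast
        have "x \<noteq> x'" using ne x x' by blast
        then have "d \<le> dist x x'" using sep x x' by metis
        show "disjnt u u'" unfolding disjnt_def x(3) x'(3)
        proof (rule ccontr)
          assume "B x \<inter> B x' \<noteq> {}"
          then obtain z where "dist x z < d/2" "dist x' z < d/2" unfolding B_def by auto
          moreover have "dist x x' \<le> dist x z + dist z x'" by (rule dist_triangle)
          ultimately show False using \<open>d \<le> dist x x'\<close> by (simp add: dist_commute)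
        qed
      qed
      show "\<forall>u\<in>{B x | x. x \<in> C \<and> p x = y}. \<exists>q. homeomorphism u T p q"
      proof (intro ballI)
        fix u assume "u \<in> {B x | x. x \<in> C \<and> p x = y}"
        then obtain x where x: "x \<in> C" "p x = y" and ux: "u = B x" by blast
        have inj: "inj_on p (B x)"
        proof (rule inj_onI, rule ccontr)
          fix z z' assume z: "z \<in> B x" "z' \<in> B x" "p z = p z'" "z \<noteq> z'"
          then have "d \<le> dist z z'" using sep unfolding B_def by blast
          moreover have "dist z z' < d"
          proof -
            have "dist x z < d/2" "dist x z' < d/2" using z unfolding B_def by auto
            moreover have "dist z z' \<le> dist z x + dist x z'" by (rule dist_triangle)
            ultimately show ?thesis by (simp add: dist_commute)
          qed
          ultimately show False by simp
        qed
        obtain q where "homeomorphism (B x) T p q"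
        proof (rule homeomorphism_injective_open_map[OF _ BT[OF x] inj])
          show "continuous_on (B x) p" using contp by (rule continuous_on_subset) (auto simp: B_def)
          fix U assume U: "openin (top_of_set (B x)) U"
          then have "openin (top_of_set C) U" using Bopen openin_trans by blast
          then have "openin (top_of_set S) (p ` U)" by (rule popen)
          moreover have "p ` U \<subseteq> T" using U BT[OF x] openin_imp_subset by blast
          ultimately show "openin (top_of_set T) (p ` U)" using openin_subset_trans oT
            by (metis openin_imp_subset)
        qed
        then show "\<exists>q. homeomorphism u T p q" unfolding ux by blast
      qed
    qed
  qed
qed

lemma istop_frame: "istopology (\<lambda>U. U \<subseteq> frames3 \<and>
       openin (top_of_set O3_mats) {R \<in> O3_mats. frame_of R \<in> U})"
  unfolding istopology_def
proof (rule conjI; intro allI impI)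
  fix S T :: "mat3 set set"
  assume "S \<subseteq> frames3 \<and> openin (top_of_set O3_mats) {R \<in> O3_mats. frame_of R \<in> S}"
     and "T \<subseteq> frames3 \<and> openin (top_of_set O3_mats) {R \<in> O3_mats. frame_of R \<in> T}"
  then have "openin (top_of_set O3_mats) ({R \<in> O3_mats. frame_of R \<in> S} \<inter> {R \<in> O3_mats. frame_of R \<in> T})"
    by blast
  moreover have "{R \<in> O3_mats. frame_of R \<in> S} \<inter> {R \<in> O3_mats. frame_of R \<in> T} = {R \<in> O3_mats. frame_of R \<in> S \<inter> T}"
    by blast
  ultimately show "S \<inter> T \<subseteq> frames3 \<and> openin (top_of_set O3_mats) {R \<in> O3_mats. frame_of R \<in> S \<inter> T}"
    using \<open>S \<subseteq> frames3 \<and> _\<close> by auto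
next
  fix K :: "mat3 set set set"
  assume K: "\<forall>S\<in>K. S \<subseteq> frames3 \<and> openin (top_of_set O3_mats) {R \<in> O3_mats. frame_of R \<in> S}"
  have "openin (top_of_set O3_mats) (\<Union>S\<in>K. {R \<in> O3_mats. frame_of R \<in> S})"
    using K by blast
  moreover have "(\<Union>S\<in>K. {R \<in> O3_mats. frame_of R \<in> S}) = {R \<in> O3_mats. frame_of R \<in> \<Union>K}" by blast
  ultimately show "\<Union>K \<subseteq> frames3 \<and> openin (top_of_set O3_mats) {R \<in> O3_mats. frame_of R \<in> \<Union>K}"
    using K by auto
qed

lemma openin_frame_top: "openin frame_top U \<longleftrightarrow> U \<subseteq> frames3 \<and>
       openin (top_of_set O3_mats) {R \<in> O3_mats. frame_of R \<in> U}"
  unfolding frame_top_def using topology_inverse'[OF istop_frame] by simp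

lemma topspace_frame_top: "topspace frame_top = frames3"
proof -
  have "{R \<in> O3_mats. frame_of R \<in> frames3} = O3_mats" by (auto simp: frames3_def)
  then have "openin frame_top frames3"
    unfolding openin_frame_top by simp
  then show ?thesis unfolding topspace_def using openin_frame_top by blast
qed

lemma compact_O3: "compact O3_mats"
proof -
  have b: "bounded O3_mats" unfolding bounded_iff
  proof (intro exI ballI)
    fix R :: mat3 assume "R \<in> O3_mats"
    then have o: "orthogonal_matrix R" by (simp add: O3_mats_def)
    have "norm (R $ i) = 1" for i
      using o orthogonal_matrix_orthonormal_rows[of R] by (simp add: row_def vec_lambda_eta)
    moreover have "norm R \<le> (\<Sum>i\<in>UNIV. norm (R $ i))"
      unfolding norm_vec_def by (rule L2_set_le_sum) simp
    ultimately show "norm R \<le> 3" by (simp add: sum_3)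
  qed
  have eq: "O3_mats = {R. transpose R ** R = mat 1} \<inter> {R. R ** transpose R = mat 1}"
    by (auto simp: O3_mats_def orthogonal_matrix_def)
  have c1: "closed {R::mat3. transpose R ** R = mat 1}"
  proof (rule closed_Collect_eq)
    have "continuous_on UNIV (\<lambda>R::mat3. \<chi> i j. \<Sum>k\<in>UNIV. R$k$i * R$k$j)"
      by (intro continuous_on_vec_lambda continuous_on_sum continuous_on_mult continuous_on_component continuous_on_id)
    then show "continuous_on UNIV (\<lambda>R::mat3. transpose R ** R)"
      by (simp add: matrix_matrix_mult_def transpose_def)
  qed (rule continuous_on_const)
  have c2: "closed {R::mat3. R ** transpose R = mat 1}"
  proof (rule closed_Collect_eq)
    have "continuous_on UNIV (\<lambda>R::mat3. \<chi> i j. \<Sum>k\<in>UNIV. R$i$k * R$j$k)"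
      by (intro continuous_on_vec_lambda continuous_on_sum continuous_on_mult continuous_on_component continuous_on_id)
    then show "continuous_on UNIV (\<lambda>R::mat3. R ** transpose R)"
      by (simp add: matrix_matrix_mult_def transpose_def)
  qed (rule continuous_on_const)
  have "closed O3_mats" unfolding eq by (rule closed_Int[OF c1 c2])
  then show ?thesis using b by (simp add: compact_eq_bounded_closed)
qed

lemma cont_Psi: "continuous_on A Psi"
proof -
  have "continuous_on A (\<lambda>R::mat3. \<Sum>i\<in>UNIV. R$a$i * R$b$i * R$c$i * R$d$i)" for a b c d
    by (intro continuous_on_sum continuous_on_mult continuous_on_component continuous_on_id)
  then have "continuous_on A (\<lambda>R::mat3. \<chi> a b c d. \<Sum>i\<in>UNIV. R$a$i * R$b$i * R$c$i * R$d$i)"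
    by (intro continuous_on_vec_lambda) 
  then show ?thesis unfolding Psi_def[abs_def] .
qed


definition Psi' :: "mat3 set \<Rightarrow> real^3^3^3^3" where "Psi' F = Psi (SOME R. R \<in> F)"
definition Phi :: "real^3^3^3^3 \<Rightarrow> mat3 set" where "Phi x = frame_of (SOME R. R \<in> O3_mats \<and> Psi R = x)"
definition XX :: "(real^3^3^3^3) set" where "XX = Psi ` O3_mats"

lemma Psi'_frame: "Psi' (frame_of R) = Psi R"
proof -
  have "(SOME R'. R' \<in> frame_of R) \<in> frame_of R" using in_frame_of by (metis someI_ex)
  then obtain P where "signed_perm_matrix P" "(SOME R'. R' \<in> frame_of R) = R ** P"
    by (auto simp: frame_of_def)
  then show ?thesis unfolding Psi'_def by (simp add: Psi_perm)
qed

lemma Psi'_XX: assumes "F \<in> frames3" shows "Psi' F \<in> XX"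
proof -
  obtain R where R: "R \<in> O3_mats" "F = frame_of R" using assms by (auto simp: frames3_def)
  then have "Psi' F = Psi R" by (simp add: Psi'_frame)
  moreover have "Psi R \<in> Psi ` O3_mats" using R(1) by (rule imageI)
  ultimately show ?thesis by (simp add: XX_def)
qed

lemma Phi_Psi': assumes "F \<in> frames3" shows "Phi (Psi' F) = F"
proof -
  obtain R where R: "R \<in> O3_mats" "F = frame_of R" using assms by (auto simp: frames3_def)
  define R' where "R' = (SOME R'. R' \<in> O3_mats \<and> Psi R' = Psi R)"
  have R': "R' \<in> O3_mats \<and> Psi R' = Psi R" unfolding R'_def using R by (metis (mono_tags, lifting) someI_ex)
  have "frame_of R' = frame_of R" using Psi_frame_iff[of R' R] R R' by (simp add: O3_mats_def)
  then show ?thesis by (simp add: Phi_def R Psi'_frame R'_def[symmetric])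
qed

lemma Phi_XX: assumes "x \<in> XX" shows "Phi x \<in> frames3" "Psi' (Phi x) = x"
proof -
  have "\<exists>R. R \<in> O3_mats \<and> Psi R = x" using assms by (auto simp: XX_def)
  then have R: "(SOME R. R \<in> O3_mats \<and> Psi R = x) \<in> O3_mats \<and> Psi (SOME R. R \<in> O3_mats \<and> Psi R = x) = x"
    by (rule someI_ex)
  then show "Phi x \<in> frames3" "Psi' (Phi x) = x" by (auto simp: Phi_def frames3_def Psi'_frame)
qed

lemma cont_Psi': "continuous_map frame_top euclidean Psi'"
  unfolding continuous_map_def
proof (intro conjI allI impI)
  show "Psi' \<in> topspace frame_top \<rightarrow> topspace euclidean" by simp
  fix U :: "(real^3^3^3^3) set" assume "openin euclidean U"
  then have oU: "open U" by simp
  have fr: "\<And>R. R \<in> O3_mats \<Longrightarrow> frame_of R \<in> frames3" by (simp add: frames3_def)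
  have "{R \<in> O3_mats. frame_of R \<in> {F \<in> topspace frame_top. Psi' F \<in> U}} = O3_mats \<inter> Psi -` U"
    using fr by (auto simp: topspace_frame_top Psi'_frame)
  moreover have "openin (top_of_set O3_mats) (O3_mats \<inter> Psi -` U)"
    using continuous_openin_preimage_gen[OF cont_Psi oU] .
  ultimately show "openin frame_top {F \<in> topspace frame_top. Psi' F \<in> U}"
    unfolding openin_frame_top by (simp add: topspace_frame_top)
qed

lemma cont_Phi: "continuous_map (top_of_set XX) frame_top Phi"
  unfolding continuous_map_def
proof (intro conjI allI impI)
  show "Phi \<in> topspace (top_of_set XX) \<rightarrow> topspace frame_top"
    using Phi_XX by (simp add: topspace_frame_top)
  fix U assume "openin frame_top U"
  then have U: "U \<subseteq> frames3" and V: "openin (top_of_set O3_mats) {R \<in> O3_mats. frame_of R \<in> U}"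
    unfolding openin_frame_top by auto
  define V where "V = {R \<in> O3_mats. frame_of R \<in> U}"
  have sat: "R' \<in> V" if "R \<in> V" "R' \<in> O3_mats" "Psi R' = Psi R" for R R'
    using that Psi_frame_iff by (auto simp: V_def O3_mats_def)
  have eq: "{x \<in> topspace (top_of_set XX). Phi x \<in> U} = Psi ` V"
  proof
    show "{x \<in> topspace (top_of_set XX). Phi x \<in> U} \<subseteq> Psi ` V"
    proof clarify
      fix x assume x: "x \<in> topspace (top_of_set XX)" "Phi x \<in> U"
      then have "x \<in> XX" by simp
      then have "\<exists>R. R \<in> O3_mats \<and> Psi R = x" by (auto simp: XX_def)
      then have R: "(SOME R. R \<in> O3_mats \<and> Psi R = x) \<in> O3_mats \<and> Psi (SOME R. R \<in> O3_mats \<and> Psi R = x) = x"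
        by (rule someI_ex)
      then have "(SOME R. R \<in> O3_mats \<and> Psi R = x) \<in> V" using x(2) by (simp add: V_def Phi_def)
      then show "x \<in> Psi ` V" using R by (metis (no_types, lifting) image_eqI)
    qed
    show "Psi ` V \<subseteq> {x \<in> topspace (top_of_set XX). Phi x \<in> U}"
    proof clarify
      fix R assume R: "R \<in> V"
      then have RO: "R \<in> O3_mats" by (simp add: V_def)
      then have "Psi R \<in> XX" by (simp add: XX_def)
      moreover have "Phi (Psi R) = frame_of R" using Phi_Psi'[of "frame_of R"] RO
        by (simp add: Psi'_frame frames3_def)
      ultimately show "Psi R \<in> topspace (top_of_set XX) \<and> Phi (Psi R) \<in> U" using R by (simp add: V_def)
    qed
  qed
  have "closedin (top_of_set O3_mats) (O3_mats - V)" using V by (simp add: V_def closedin_diff)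
  then have "compact (O3_mats - V)" using closedin_compact compact_O3 by blast
  then have "compact (Psi ` (O3_mats - V))" using compact_continuous_image cont_Psi by blast
  then have cl: "closed (Psi ` (O3_mats - V))" by (simp add: compact_imp_closed)
  have "Psi ` V = XX \<inter> - Psi ` (O3_mats - V)"
  proof
    show "Psi ` V \<subseteq> XX \<inter> - Psi ` (O3_mats - V)"
    proof
      fix t assume "t \<in> Psi ` V"
      then obtain R where R: "R \<in> V" "t = Psi R" by blast
      have RO: "R \<in> O3_mats" using R(1) by (simp add: V_def)
      have "t \<in> XX" using R(2) RO by (simp add: XX_def)
      moreover have "t \<notin> Psi ` (O3_mats - V)"
      proof
        assume "t \<in> Psi ` (O3_mats - V)"
        then obtain R' where R': "R' \<in> O3_mats" "R' \<notin> V" "t = Psi R'" by blast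
        then show False using sat[OF R(1) R'(1)] R(2) by simp
      qed
      ultimately show "t \<in> XX \<inter> - Psi ` (O3_mats - V)" by blast
    qed
    show "XX \<inter> - Psi ` (O3_mats - V) \<subseteq> Psi ` V"
    proof
      fix t assume t: "t \<in> XX \<inter> - Psi ` (O3_mats - V)"
      then obtain R where R: "R \<in> O3_mats" "t = Psi R" by (auto simp: XX_def)
      show "t \<in> Psi ` V"
      proof (cases "R \<in> V")
        case True then show ?thesis using R by blast
      next
        case False then have "t \<in> Psi ` (O3_mats - V)" using R by blast
        then show ?thesis using t by blast
      qed
    qed
  qed
  then show "openin (top_of_set XX) {x \<in> topspace (top_of_set XX). Phi x \<in> U}"
    using eq cl by (simp add: openin_open_Int open_Compl)
qed

definition pq :: "quat \<Rightarrow> real^3^3^3^3" where "pq q = Psi (Rot q)"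

lemma Rot_entries:
  "Rot q $1$1 = fst q * fst q + fst (snd q) * fst (snd q) - fst (snd (snd q)) * fst (snd (snd q)) - snd (snd (snd q)) * snd (snd (snd q))"
  "Rot q $1$2 = 2*(fst (snd q) * fst (snd (snd q)) - fst q * snd (snd (snd q)))"
  "Rot q $1$3 = 2*(fst (snd q) * snd (snd (snd q)) + fst q * fst (snd (snd q)))"
  "Rot q $2$1 = 2*(fst (snd q) * fst (snd (snd q)) + fst q * snd (snd (snd q)))"
  "Rot q $2$2 = fst q * fst q - fst (snd q) * fst (snd q) + fst (snd (snd q)) * fst (snd (snd q)) - snd (snd (snd q)) * snd (snd (snd q))"
  "Rot q $2$3 = 2*(fst (snd (snd q)) * snd (snd (snd q)) - fst q * fst (snd q))"
  "Rot q $3$1 = 2*(fst (snd q) * snd (snd (snd q)) - fst q * fst (snd (snd q)))"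
  "Rot q $3$2 = 2*(fst (snd (snd q)) * snd (snd (snd q)) + fst q * fst (snd q))"
  "Rot q $3$3 = fst q * fst q - fst (snd q) * fst (snd q) - fst (snd (snd q)) * fst (snd (snd q)) + snd (snd (snd q)) * snd (snd (snd q))"
  by (cases q; simp)+

lemma cont_Rot_entry: "continuous_on S (\<lambda>q. Rot q $ i $ j)"
proof -
  have "\<forall>i j. continuous_on S (\<lambda>q. Rot q $ i $ j)"
    unfolding forall_3 Rot_entries by (intro conjI continuous_intros)
  then show ?thesis by blast
qed

lemma cont_Rot: "continuous_on S Rot"
proof -
  have "continuous_on S (\<lambda>q. \<chi> i j. Rot q $ i $ j)"
    by (intro continuous_on_vec_lambda cont_Rot_entry)
  then show ?thesis by (simp add: vec_lambda_eta)
qed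

lemma cont_pq: "continuous_on S pq"
  unfolding pq_def using continuous_on_compose[OF cont_Rot cont_Psi] by (simp add: o_def)

lemma pq_image: "pq ` sphere 0 1 = XX"
proof
  show "pq ` sphere 0 1 \<subseteq> XX"
    using Rot_orth by (auto simp: pq_def XX_def O3_mats_def)
  show "XX \<subseteq> pq ` sphere 0 1"
  proof
    fix x assume "x \<in> XX"
    then obtain R where R: "orthogonal_matrix R" "x = Psi R" by (auto simp: XX_def O3_mats_def)
    have "\<exists>R'. orthogonal_matrix R' \<and> det R' = 1 \<and> Psi R' = Psi R"
    proof (cases "det R = 1")
      case True then show ?thesis using R by blast
    next
      case False
      then have d: "det R = -1" using det_orthogonal_matrix[OF R(1)] by simp
      have o: "orthogonal_matrix (R ** (- mat 1))"
        using R(1) signed_perm_orth[OF signed_perm_neg] orthogonal_matrix_mul by blast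
      have "det (- mat 1 :: mat3) = -1" by (simp add: det_3 mat_def)
      then have "det (R ** (- mat 1)) = 1" using d by (simp add: det_mul)
      moreover have "Psi (R ** (- mat 1)) = Psi R" using Psi_perm[OF signed_perm_neg] .
      ultimately show ?thesis using o by blast
    qed
    then obtain R' where "orthogonal_matrix R'" "det R' = 1" "Psi R' = Psi R" by blast
    then obtain q where "norm q = 1" "Rot q = R'" using Rot_surj by blast
    then show "x \<in> pq ` sphere 0 1" using R \<open>Psi R' = Psi R\<close> by (force simp: pq_def)
  qed
qed

lemma qmul_diff: "qmul x a - qmul x b = qmul x (a - b)"
  by (cases x; cases a; cases b) (simp add: algebra_simps)

lemma qmul_diff2: "qmul a g - qmul b g = qmul (a - b) g"
  by (cases g; cases a; cases b) (simp add: algebra_simps)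

lemma pq_fiber:
  assumes x: "norm x = 1" and y: "norm y = 1" and eq: "pq x = pq y"
  shows "\<exists>g. norm g = 1 \<and> signed_perm_matrix (Rot g) \<and> qmul x g = y"
proof -
  have ox: "orthogonal_matrix (Rot x)" and oy: "orthogonal_matrix (Rot y)" using Rot_orth x y by auto
  have "frame_of (Rot x) = frame_of (Rot y)" using Psi_frame_iff[OF ox oy] eq by (simp add: pq_def)
  then have "Rot y \<in> frame_of (Rot x)" using in_frame_of by metis
  then obtain P where P: "signed_perm_matrix P" "Rot y = Rot x ** P" by (auto simp: frame_of_def)
  define g where "g = qmul (qconj x) y"
  have "norm g = 1" using x y by (simp add: g_def norm_qmul norm_qconj)
  moreover have "Rot g = P"
  proof -
    have "Rot g = transpose (Rot x) ** (Rot x ** P)" by (simp add: g_def Rot_mult Rot_conj P(2))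
    also have "\<dots> = P" using ox by (simp add: matrix_mul_assoc orthogonal_matrix_def)
    finally show ?thesis .
  qed
  moreover have "qmul x g = y"
    unfolding g_def qmul_assoc[symmetric] qmul_conj x by (simp add: qmul_one)
  ultimately show ?thesis using P(1) by blast
qed

lemma signed_perm_diag:
  assumes "signed_perm_matrix P"
  shows "P$i$i = 1 \<or> P$i$i = 0 \<or> P$i$i = -1"
  using signed_perm_entry[OF assms] by metis

lemma sep_aux:
  assumes g: "norm g = 1" and P: "signed_perm_matrix (Rot g)" and ne: "g \<noteq> (1,0,0,0)"
  shows "1/2 \<le> norm ((1,0,0,0) - g)"
proof -
  obtain w a b c where gg: "g = (w,a,b,c)" by (cases g) auto
  have n1: "w*w+a*a+b*b+c*c = 1" using g norm_quat_sq[of w a b c] gg by simp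
  have d1: "w*w+a*a-b*b-c*c \<in> {1,0,-1}" using signed_perm_diag[OF P, of 1] gg by simp
  have d2: "w*w-a*a+b*b-c*c \<in> {1,0,-1}" using signed_perm_diag[OF P, of 2] gg by simp
  have d3: "w*w-a*a-b*b+c*c \<in> {1,0,-1}" using signed_perm_diag[OF P, of 3] gg by simp
  have nn: "(norm ((1,0,0,0) - g))^2 = 2 - 2*w"
    using n1 norm_quat_sq[of "1-w" "-a" "-b" "-c"] by (simp add: gg algebra_simps)
  have "w*w \<le> 3/4 \<or> (a*a+b*b+c*c = 0)"
  proof (cases "w*w+a*a-b*b-c*c = 1 \<and> w*w-a*a+b*b-c*c = 1 \<and> w*w-a*a-b*b+c*c = 1")
    case True then show ?thesis using n1 by linarith
  next
    case False
    then have "(w*w+a*a-b*b-c*c) + (w*w-a*a+b*b-c*c) + (w*w-a*a-b*b+c*c) \<le> 2" using d1 d2 d3 by auto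
    then show ?thesis using n1 by linarith
  qed
  then have "w \<le> 7/8"
  proof
    assume "w*w \<le> 3/4"
    show "w \<le> 7/8"
    proof (rule ccontr)
      assume "\<not> w \<le> 7/8"
      then have "7/8 * (7/8) < w * w" by (intro mult_strict_mono) auto
      then show False using \<open>w*w \<le> 3/4\<close> by simp
    qed
  next
    assume abc: "a*a+b*b+c*c = 0"
    then have "a = 0" "b = 0" "c = 0" by (auto simp: add_nonneg_eq_0_iff)
    then have "w*w = 1" using n1 by simp
    then have "w = 1 \<or> w = -1" by (metis mult_cancel_left1 square_eq_1_iff)
    then show "w \<le> 7/8" using ne gg \<open>a = 0\<close> \<open>b = 0\<close> \<open>c = 0\<close> by auto
  qed
  then have "1/4 \<le> (norm ((1,0,0,0) - g))^2" using nn by linarith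
  then have "(1/2)^2 \<le> (norm ((1,0,0,0) - g))^2" by (simp add: power2_eq_square)
  then show ?thesis by (rule power2_le_imp_le) simp
qed

lemma cov_pq: "covering_space (sphere (0::quat) 1) pq XX"
proof (rule covering_from_isometries[where d="1/2"])
  show "compact (sphere (0::quat) 1)" by simp
  show "continuous_on (sphere 0 1) pq" by (rule cont_pq)
  show "pq ` sphere 0 1 = XX" by (rule pq_image)
  show "(0::real) < 1/2" by simp
next
  fix x y :: quat assume x: "x \<in> sphere 0 1" and y: "y \<in> sphere 0 1" and e: "pq x = pq y" and ne: "x \<noteq> y"
  have nx: "norm x = 1" and ny: "norm y = 1" using x y by auto
  obtain g where g: "norm g = 1" "signed_perm_matrix (Rot g)" "qmul x g = y" using pq_fiber[OF nx ny e] by blast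
  have "g \<noteq> (1,0,0,0)" using g(3) ne by (auto simp: qmul_one)
  then have "1/2 \<le> norm ((1,0,0,0) - g)" using sep_aux g by blast
  also have "\<dots> = norm (qmul x ((1,0,0,0) - g))" by (simp add: norm_qmul nx)
  also have "\<dots> = dist x y" by (simp add: qmul_diff[symmetric] qmul_one g(3) dist_norm)
  finally show "1/2 \<le> dist x y" .
next
  fix x y :: quat assume x: "x \<in> sphere 0 1" and y: "y \<in> sphere 0 1" and e: "pq x = pq y"
  have nx: "norm x = 1" and ny: "norm y = 1" using x y by auto
  obtain g where g: "norm g = 1" "signed_perm_matrix (Rot g)" "qmul x g = y" using pq_fiber[OF nx ny e] by blast
  show "\<exists>h. h ` sphere 0 1 \<subseteq> sphere 0 1 \<and> (\<forall>z\<in>sphere 0 1. pq (h z) = pq z) \<and>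
          (\<forall>z\<in>sphere 0 1. \<forall>z'\<in>sphere 0 1. dist (h z) (h z') = dist z z') \<and> h x = y"
  proof (intro exI[of _ "\<lambda>z. qmul z g"] conjI ballI)
    show "(\<lambda>z. qmul z g) ` sphere 0 1 \<subseteq> sphere 0 1" using g(1) by (auto simp: norm_qmul)
    fix z assume "z \<in> sphere (0::quat) 1"
    show "pq (qmul z g) = pq z" unfolding pq_def Rot_mult by (rule Psi_perm[OF g(2)])
  next
    fix z z' :: quat
    show "dist (qmul z g) (qmul z' g) = dist z z'"
      by (simp add: dist_norm qmul_diff2 norm_qmul g(1))
  qed (rule g(3))
qed

lemma extend_sphere_map:
  fixes phi :: "real^3 \<Rightarrow> real^3^3^3^3"
  assumes cont: "continuous_on (sphere a r) phi" and im: "phi ` sphere a r \<subseteq> XX"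
  shows "\<exists>g. continuous_on (cball a r) g \<and> g ` cball a r \<subseteq> XX \<and> (\<forall>x\<in>sphere a r. g x = phi x)"
proof -
  have sc: "simply_connected (sphere a r)" by (rule simply_connected_sphere) simp
  obtain k where k: "continuous_on (sphere a r) k" "k \<in> sphere a r \<rightarrow> sphere 0 1"
      "\<And>y. y \<in> sphere a r \<Longrightarrow> pq (k y) = phi y"
    using covering_space_lift[OF cov_pq sc locally_path_connected_sphere cont] im by blast
  obtain c where c: "homotopic_with_canon (\<lambda>z. True) (sphere a r) (sphere (0::quat) 1) k (\<lambda>x. c)"
  proof -
    have dim: "DIM(real^3) < DIM(quat)" by simp
    show ?thesis using inessential_spheremap_lowdim[where f=k and a=a and r=r and b=0 and s=1, OF dim k(1) k(2)] that by blast
  qed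
  have "homotopic_with_canon (\<lambda>z. True) (sphere a r) XX (pq \<circ> k) (pq \<circ> (\<lambda>x. c))"
    by (rule homotopic_with_compose_continuous_left[OF _ cont_pq]) (use c pq_image in auto)
  then have "\<exists>c. homotopic_with_canon (\<lambda>z. True) (sphere a r) XX (pq \<circ> k) (\<lambda>x. c)"
    by (auto simp: o_def)
  then obtain g where g: "continuous_on (cball a r) g" "g ` cball a r \<subseteq> XX" "\<forall>x\<in>sphere a r. g x = (pq \<circ> k) x"
    unfolding nullhomotopic_from_sphere_extension by blast
  then show ?thesis using k(3) by auto
qed

theorem corollary3p6:
  fixes M S :: "(real^3) set" and f :: "real^3 \<Rightarrow> (real^3^3) set" and s :: "real^3"
  assumes "smooth_3manifold M"
    and "S \<subseteq> M"
    and "frame_field_on (M - S) f"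
    and "s \<in> S"
    and "\<exists>T. open T \<and> s \<in> T \<and> T \<inter> M \<inter> S = {s}"
    and "s \<notin> mbdry M"
  shows "redundant M S f {s}"
proof -
  note SM = assms(2) and ff = assms(3) and sS = assms(4)
  obtain T where T: "open T" "s \<in> T" "T \<inter> M \<inter> S = {s}" using assms(5) by blast
  have sI: "s \<in> interior M" using assms(6) SM sS by (auto simp: mbdry_def)
  have "open (interior M \<inter> T)" using T(1) by blast
  then obtain e where e: "e > 0" "ball s e \<subseteq> interior M \<inter> T"
    using sI T(2) by (meson IntI open_contains_ball)
  define r where "r = e/2"
  have r0: "r > 0" using e by (simp add: r_def)
  define Bc where "Bc = cball s r"
  have Bc_int: "Bc \<subseteq> interior M" and BcT: "Bc \<subseteq> T"
    using e r0 unfolding Bc_def r_def by (auto simp: subset_iff)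
  have BcM: "Bc \<subseteq> M" using Bc_int interior_subset by blast
  have clB: "closedin (top_of_set M) Bc" using BcM by (intro closed_subset) (auto simp: Bc_def)
  define I where "I = (top_of_set M) interior_of Bc"
  have ballI: "ball s r \<subseteq> I"
  proof -
    have "ball s r \<subseteq> M" using BcM unfolding Bc_def by auto
    then have "openin (top_of_set M) (ball s r)"
      by (metis openin_open_Int open_ball inf.absorb_iff2)
    then show ?thesis unfolding I_def by (rule interior_of_maximal[rotated]) (auto simp: Bc_def)
  qed
  have IB: "I \<subseteq> Bc" unfolding I_def by (rule interior_of_subset)
  have sIB: "s \<in> I" using ballI r0 by auto
  have sph: "sphere s r \<subseteq> M - S"
  proof
    fix x assume x: "x \<in> sphere s r"
    then have "x \<in> Bc" by (auto simp: Bc_def)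
    then have xM: "x \<in> M" "x \<in> T" using BcM BcT by auto
    have "x \<noteq> s" using x r0 by auto
    then have "x \<notin> S" using T(3) xM by blast
    then show "x \<in> M - S" using xM by blast
  qed
  have cf: "continuous_map (top_of_set (M - S)) frame_top f" using ff by (simp add: frame_field_on_def)
  have fim: "f x \<in> frames3" if "x \<in> M - S" for x
    using continuous_map_image_subset_topspace[OF cf] that by (auto simp: topspace_frame_top)
  have cphi: "continuous_on (M - S) (Psi' \<circ> f)"
    using continuous_map_compose[OF cf cont_Psi'] by simp
  have phiX: "(Psi' \<circ> f) ` sphere s r \<subseteq> XX" using sph fim Psi'_XX by auto
  obtain g where g: "continuous_on (cball s r) g" "g ` cball s r \<subseteq> XX"
      "\<And>x. x \<in> sphere s r \<Longrightarrow> g x = (Psi' \<circ> f) x"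
    using extend_sphere_map[OF continuous_on_subset[OF cphi sph] phiX] by blast
  have gsph: "Phi (g x) = f x" if "x \<in> sphere s r" for x
    using g(3)[OF that] Phi_Psi'[OF fim] sph that by auto
  define f' where "f' x = (if x \<in> Bc then Phi (g x) else f x)" for x
  define D where "D = (M - S) \<union> I"
  have DB: "D - ball s r \<subseteq> M - S"
  proof
    fix x assume x: "x \<in> D - ball s r"
    show "x \<in> M - S"
    proof (cases "x \<in> I")
      case True
      then have "x \<in> sphere s r" using IB x by (auto simp: Bc_def)
      then show ?thesis using sph by blast
    next
      case False then show ?thesis using x by (auto simp: D_def)
    qed
  qed
  have cont': "continuous_map (top_of_set D) frame_top f'"
    unfolding f'_def
  proof (rule continuous_map_cases)
    have sub1: "top_of_set D closure_of {x. x \<in> Bc} \<subseteq> D \<inter> Bc"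
      by (subst closure_of_restrict, rule closure_of_minimal)
         (auto intro: closedin_closed_Int simp: Bc_def)
    have "continuous_map (top_of_set (D \<inter> Bc)) frame_top (Phi \<circ> g)"
    proof (rule continuous_map_compose[OF _ cont_Phi])
      have "continuous_on (D \<inter> Bc) g" using g(1) by (rule continuous_on_subset) (auto simp: Bc_def)
      moreover have "g ` (D \<inter> Bc) \<subseteq> XX" using g(2) by (auto simp: Bc_def)
      ultimately show "continuous_map (top_of_set (D \<inter> Bc)) (top_of_set XX) g"
        by (simp add: continuous_map_in_subtopology image_subset_iff_funcset)
    qed
    then have "continuous_map (subtopology (top_of_set D) (D \<inter> Bc)) frame_top (\<lambda>x. Phi (g x))"
      by (simp add: subtopology_subtopology o_def)
    then show "continuous_map (subtopology (top_of_set D) (top_of_set D closure_of {x. x \<in> Bc})) frame_top (\<lambda>x. Phi (g x))"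
      by (rule continuous_map_from_subtopology_mono[OF _ sub1])
  next
    have sub2: "top_of_set D closure_of {x. x \<notin> Bc} \<subseteq> D - ball s r"
    proof (subst closure_of_restrict, rule closure_of_minimal)
      show "topspace (top_of_set D) \<inter> {x. x \<notin> Bc} \<subseteq> D - ball s r" by (auto simp: Bc_def)
      have "closedin (top_of_set D) (D \<inter> (- ball s r))" by (intro closedin_closed_Int) auto
      then show "closedin (top_of_set D) (D - ball s r)" by (simp add: Diff_eq)
    qed
    have "continuous_map (top_of_set (D - ball s r)) frame_top f"
      using cf DB by (metis continuous_map_from_subtopology_mono subtopology_subtopology inf.absorb_iff2)
    then have "continuous_map (subtopology (top_of_set D) (D - ball s r)) frame_top f"
      by (simp add: subtopology_subtopology Int_absorb1)
    then show "continuous_map (subtopology (top_of_set D) (top_of_set D closure_of {x. x \<notin> Bc})) frame_top f"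
      by (rule continuous_map_from_subtopology_mono[OF _ sub2])
  next
    fix x assume x: "x \<in> top_of_set D frontier_of {x. x \<in> Bc}"
    have "x \<in> top_of_set D closure_of {x. x \<in> Bc}"
      using x by (simp add: frontier_of_closures)
    moreover have "x \<in> top_of_set D closure_of (D - {x. x \<in> Bc})"
      using x by (simp add: frontier_of_closures)
    moreover have "top_of_set D closure_of (D - {x. x \<in> Bc}) \<subseteq> D - ball s r"
    proof (rule closure_of_minimal)
      show "D - {x. x \<in> Bc} \<subseteq> D - ball s r" by (auto simp: Bc_def)
      have "closedin (top_of_set D) (D \<inter> (- ball s r))" by (intro closedin_closed_Int) auto
      then show "closedin (top_of_set D) (D - ball s r)" by (simp add: Diff_eq)
    qed
    moreover have "top_of_set D closure_of {x. x \<in> Bc} \<subseteq> D \<inter> Bc"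
      by (subst closure_of_restrict, rule closure_of_minimal) (auto intro: closedin_closed_Int simp: Bc_def)
    ultimately have "x \<in> Bc" "x \<notin> ball s r" by blast+
    then have "x \<in> sphere s r" by (simp add: Bc_def)
    then show "Phi (g x) = f x" by (rule gsph)
  qed
  have agree: "\<forall>x \<in> (M - S) - I. f' x = f x"
  proof
    fix x assume x: "x \<in> (M - S) - I"
    show "f' x = f x"
    proof (cases "x \<in> Bc")
      case True
      moreover have "x \<notin> ball s r" using x ballI by blast
      ultimately have "x \<in> sphere s r" by (simp add: Bc_def)
      then show ?thesis using True by (simp add: f'_def gsph)
    next
      case False then show ?thesis by (simp add: f'_def)
    qed
  qed
  have bal: "boundary_aligned M D f'" if ba: "boundary_aligned M (M - S) f"
    unfolding boundary_aligned_def
  proof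
    fix p assume p: "p \<in> mbdry M \<inter> D"
    then have "p \<notin> interior M" by (simp add: mbdry_def)
    then have pB: "p \<notin> Bc" using Bc_int by blast
    then have "p \<in> M - S" using p IB by (auto simp: D_def)
    then have "\<exists>v\<in>frame_axes (f p). normal_at M p v" using ba p unfolding boundary_aligned_def by blast
    then show "\<exists>v\<in>frame_axes (f' p). normal_at M p v" using pB by (simp add: f'_def)
  qed
  show ?thesis
    unfolding redundant_def
  proof (intro conjI exI[of _ Bc] exI[of _ f'])
    show "{s} \<subseteq> S" using sS by simp
    show "Bc \<subseteq> M" by (rule BcM)
    show "closedin (top_of_set M) Bc" by (rule clB)
    show "{s} \<subseteq> top_of_set M interior_of Bc" using sIB by (simp add: I_def)
    show "frame_field_on (M - S \<union> top_of_set M interior_of Bc) f'"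
      using cont' by (simp add: frame_field_on_def D_def I_def)
    show "\<forall>x\<in>M - S - top_of_set M interior_of Bc. f' x = f x" using agree by (simp add: I_def)
    show "boundary_aligned M (M - S) f \<longrightarrow> boundary_aligned M (M - S \<union> top_of_set M interior_of Bc) f'"
      using bal by (simp add: D_def I_def)
  qed
qed

end
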